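(* Let $1\le i,j,k,l\le n$ with $i<j$, $k<l$, $i\le k$. Then in ${\boldsymbol U}_{v}(\mathfrak q_n)$: \[ \mathsf E_{i,j}\mathsf E_{k,l}=\begin{cases}\mathsf E_{k,l}\mathsf E_{i,j} & (i<j<k<l\text{ or } i<k<l<j),\\ v^{-1}\mathsf E_{k,l}\mathsf E_{i,j}-\mathsf E_{i,l} & (i<j=k<l),\\ v\,\mathsf E_{k,l}\mathsf E_{i,j} & (i=k<j<l\text{ or } i<k<j=l),\\ \mathsf E_{k,l}\mathsf E_{i,j}+(v-v^{-1})\mathsf E_{i,l}\mathsf E_{k,j} & (i<k<j<l).\end{cases} \]
   Context: Let $v$ be an indeterminate. The quantum queer superalgebra ${\boldsymbol U}_{v}(\mathfrak q_n)$ is the associative superalgebra over $\mathbb Q(v)$ generated by even generators $\mathsf K_i,\mathsf K_i^{-1}$ ($1\le i\le n$), $\mathsf E_j,\mathsf F_j$ ($1\le j\le n-1$) and odd generators $\mathsf K_{\bar i}$ ($1\le i\le n$), $\mathsf E_{\bar j},\mathsf F_{\bar j}$ ($1\le j\le n-1$), subject to the following relations (indices are taken only where they make sense), where $(\epsilon_i,\alpha_j)=\delta_{i,j}-\delta_{i,j+1}$: (QQ1) $\mathsf K_i\mathsf K_i^{-1}=\mathsf K_i^{-1}\mathsf K_i=1$, $\mathsf K_i\mathsf K_j=\mathsf K_j\mathsf K_i$, $\mathsf K_i\mathsf K_{\bar j}=\mathsf K_{\bar j}\mathsf K_i$, $\mathsf K_{\bar i}\mathsf K_{\bar j}+\mathsf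 K_{\bar j}\mathsf K_{\bar i}=2\delta_{i,j}\frac{\mathsf K_i^2-\mathsf K_i^{-2}}{v^2-v^{-2}}$. (QQ2) $\mathsf K_i\mathsf E_j=v^{(\epsilon_i,\alpha_j)}\mathsf E_j\mathsf K_i$, $\mathsf K_i\mathsf E_{\bar j}=v^{(\epsilon_i,\alpha_j)}\mathsf E_{\bar j}\mathsf K_i$, $\mathsf K_i\mathsf F_j=v^{-(\epsilon_i,\alpha_j)}\mathsf F_j\mathsf K_i$, $\mathsf K_i\mathsf F_{\bar j}=v^{-(\epsilon_i,\alpha_j)}\mathsf F_{\bar j}\mathsf K_i$. (QQ3) $\mathsf K_{\bar i}\mathsf E_i-v\mathsf E_i\mathsf K_{\bar i}=\mathsf E_{\bar i}\mathsf K_i^{-1}$, $v\mathsf K_{\bar i}\mathsf E_{i-1}-\mathsf E_{i-1}\mathsf K_{\bar i}=-\mathsf K_i^{-1}\mathsf E_{\overline{i-1}}$, $\mathsf K_{\bar i}\mathsf F_i-v\mathsf F_i\mathsf K_{\bar i}=-\mathsf F_{\bar i}\mathsf K_i$, $v\mathsf K_{\bar i}\mathsf F_{i-1}-\mathsf F_{i-1}\mathsf K_{\bar i}=\mathsf K_i\mathsf F_{\overline{i-1}}$, $\mathsf K_{\bar i}\mathsf E_{\bar i}+v\mathsf E_{\bar i}\mathsf K_{\bar i}=\mathsf E_i\mathsf K_i^{-1}$, $v\mathsf K_{\bar i}\mathsf E_{\overline{i-1}}+\mathsf E_{\overline{i-1}}\mathsf K_{\bar i}=\mathsf K_i^{-1}\mathsf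 E_{i-1}$, $\mathsf K_{\bar i}\mathsf F_{\bar i}+v\mathsf F_{\bar i}\mathsf K_{\bar i}=\mathsf F_i\mathsf K_i$, $v\mathsf K_{\bar i}\mathsf F_{\overline{i-1}}+\mathsf F_{\overline{i-1}}\mathsf K_{\bar i}=\mathsf K_i\mathsf F_{i-1}$, and for $j\ne i,i-1$: $\mathsf K_{\bar i}\mathsf E_j=\mathsf E_j\mathsf K_{\bar i}$, $\mathsf K_{\bar i}\mathsf F_j=\mathsf F_j\mathsf K_{\bar i}$, $\mathsf K_{\bar i}\mathsf E_{\bar j}=-\mathsf E_{\bar j}\mathsf K_{\bar i}$, $\mathsf K_{\bar i}\mathsf F_{\bar j}=-\mathsf F_{\bar j}\mathsf K_{\bar i}$. (QQ4) $\mathsf E_i\mathsf F_j-\mathsf F_j\mathsf E_i=\delta_{i,j}\frac{\mathsf K_i\mathsf K_{i+1}^{-1}-\mathsf K_i^{-1}\mathsf K_{i+1}}{v-v^{-1}}$, $\mathsf E_{\bar i}\mathsf F_{\bar j}+\mathsf F_{\bar j}\mathsf E_{\bar i}=\delta_{i,j}\big(\frac{\mathsf K_i\mathsf K_{i+1}-\mathsf K_i^{-1}\mathsf K_{i+1}^{-1}}{v-v^{-1}}+(v-v^{-1})\mathsf K_{\bar i}\mathsf K_{\overline{i+1}}\big)$, $\mathsf E_i\mathsf F_{\bar j}-\mathsf F_{\bar j}\mathsf E_i=\delta_{i,j}(\mathsf K_{i+1}^{-1}\mathsf K_{\bar i}-\mathsf K_{\overline{i+1}}\mathsf K_i^{-1})$,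 $\mathsf E_{\bar i}\mathsf F_j-\mathsf F_j\mathsf E_{\bar i}=\delta_{i,j}(\mathsf K_{i+1}\mathsf K_{\bar i}-\mathsf K_{\overline{i+1}}\mathsf K_i)$. (QQ5) $\mathsf E_{\bar i}^2=-\frac{v-v^{-1}}{v+v^{-1}}\mathsf E_i^2$, $\mathsf F_{\bar i}^2=\frac{v-v^{-1}}{v+v^{-1}}\mathsf F_i^2$; for $|i-j|\ne1$: $\mathsf E_i\mathsf E_{\bar j}=\mathsf E_{\bar j}\mathsf E_i$, $\mathsf F_i\mathsf F_{\bar j}=\mathsf F_{\bar j}\mathsf F_i$; for $|i-j|>1$: $\mathsf E_i\mathsf E_j=\mathsf E_j\mathsf E_i$, $\mathsf F_i\mathsf F_j=\mathsf F_j\mathsf F_i$, $\mathsf E_{\bar i}\mathsf E_{\bar j}=-\mathsf E_{\bar j}\mathsf E_{\bar i}$, $\mathsf F_{\bar i}\mathsf F_{\bar j}=-\mathsf F_{\bar j}\mathsf F_{\bar i}$; $\mathsf E_i\mathsf E_{i+1}-v\mathsf E_{i+1}\mathsf E_i=\mathsf E_{\bar i}\mathsf E_{\overline{i+1}}+v\mathsf E_{\overline{i+1}}\mathsf E_{\bar i}$, $\mathsf E_i\mathsf E_{\overline{i+1}}-v\mathsf E_{\overline{i+1}}\mathsf E_i=\mathsf E_{\bar i}\mathsf E_{i+1}-v\mathsf E_{i+1}\mathsf E_{\bar i}$, $\mathsf F_i\mathsf F_{i+1}-v\mathsf F_{i+1}\mathsf F_i=-(\mathsf F_{\bar i}\mathsf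 F_{\overline{i+1}}+v\mathsf F_{\overline{i+1}}\mathsf F_{\bar i})$, $\mathsf F_i\mathsf F_{\overline{i+1}}-v\mathsf F_{\overline{i+1}}\mathsf F_i=\mathsf F_{\bar i}\mathsf F_{i+1}-v\mathsf F_{i+1}\mathsf F_{\bar i}$. (QQ6) for $|i-j|=1$: $\mathsf E_i^2X-(v+v^{-1})\mathsf E_iX\mathsf E_i+X\mathsf E_i^2=0$ for $X\in\{\mathsf E_j,\mathsf E_{\bar j}\}$ and $\mathsf F_i^2Y-(v+v^{-1})\mathsf F_iY\mathsf F_i+Y\mathsf F_i^2=0$ for $Y\in\{\mathsf F_j,\mathsf F_{\bar j}\}$. Quantum root vectors: for $1\le i\le n-1$ put $\mathsf E_{i,i+1}=\mathsf E_i$, $\overline{\mathsf E}_{i,i+1}=\mathsf E_{\bar i}$, $\mathsf E_{i+1,i}=\mathsf F_i$, $\overline{\mathsf E}_{i+1,i}=\mathsf F_{\bar i}$, and recursively for $i+1<j\le n$: $\mathsf E_{i,j}=-\mathsf E_{i,j-1}\mathsf E_{j-1}+v^{-1}\mathsf E_{j-1}\mathsf E_{i,j-1}$, $\overline{\mathsf E}_{i,j}=-\mathsf E_{i,j-1}\mathsf E_{\overline{j-1}}+v^{-1}\mathsf E_{\overline{j-1}}\mathsf E_{i,j-1}$, $\mathsf E_{j,i}=-\mathsf F_{j-1}\mathsf E_{j-1,i}+v\mathsf E_{j-1,i}\mathsf F_{j-1}$, $\overline{\mathsf E}_{j,i}=-\mathsf F_{\overline{j-1}}\mathsf E_{j-1,i}+v\mathsf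 E_{j-1,i}\mathsf F_{\overline{j-1}}$. *)

theory Defs
  imports "HOL-Computational_Algebra.Polynomial" "HOL-Computational_Algebra.Fraction_Field"
begin

type_synonym qfun = "rat poly fract"

definition qv :: qfun where "qv = Fract [:0, 1:] 1"

text \<open>A Q(v)-algebra structure on a ring 'a: a unital ring homomorphism from Q(v)
  into the centre of 'a.\<close>
definition qalg :: "(qfun \<Rightarrow> 'a::ring_1) \<Rightarrow> bool" where
  "qalg sc \<longleftrightarrow> sc 1 = 1 \<and> (\<forall>x y. sc (x + y) = sc x + sc y) \<and>
     (\<forall>x y. sc (x * y) = sc x * sc y) \<and> (\<forall>x y. sc x * y = y * sc x)"

text \<open>Defining relations (QQ1)-(QQ6) of U_v(q_n), indices 1-based.
  K, Ki = K^{-1}, Kb = K-bar (1..n); E, F, Eb, Fb (1..n-1).\<close>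
definition qq_rels :: "nat \<Rightarrow> (qfun \<Rightarrow> 'a::ring_1) \<Rightarrow> (nat \<Rightarrow> 'a) \<Rightarrow> (nat \<Rightarrow> 'a) \<Rightarrow> (nat \<Rightarrow> 'a)
    \<Rightarrow> (nat \<Rightarrow> 'a) \<Rightarrow> (nat \<Rightarrow> 'a) \<Rightarrow> (nat \<Rightarrow> 'a) \<Rightarrow> (nat \<Rightarrow> 'a) \<Rightarrow> bool" where
  "qq_rels n sc K Ki Kb E F Eb Fb \<longleftrightarrow>
   (let v = sc qv in
   \<comment> \<open>QQ1\<close>
   (\<forall>i\<in>{1..n}. \<forall>j\<in>{1..n}.
      K i * Ki i = 1 \<and> Ki i * K i = 1 \<and> K i * K j = K j * K i \<and> K i * Kb j = Kb j * K i \<and>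
      Kb i * Kb j + Kb j * Kb i =
        (if i = j then sc (2 * inverse (qv\<^sup>2 - inverse (qv\<^sup>2))) * (K i ^ 2 - Ki i ^ 2) else 0)) \<and>
   \<comment> \<open>QQ2\<close>
   (\<forall>i\<in>{1..n}. \<forall>j\<in>{1..n-1}.
      let e = (of_bool (i = j) - of_bool (i = j + 1) :: int) in
      K i * E j = sc (qv powi e) * E j * K i \<and>
      K i * Eb j = sc (qv powi e) * Eb j * K i \<and>
      K i * F j = sc (qv powi (- e)) * F j * K i \<and>
      K i * Fb j = sc (qv powi (- e)) * Fb j * K i) \<and>
   \<comment> \<open>QQ3\<close>
   (\<forall>i\<in>{1..n}.
      (i \<le> n - 1 \<longrightarrow>
         Kb i * E i - v * E i * Kb i = Eb i * Ki i \<and>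
         Kb i * F i - v * F i * Kb i = - (Fb i * K i) \<and>
         Kb i * Eb i + v * Eb i * Kb i = E i * Ki i \<and>
         Kb i * Fb i + v * Fb i * Kb i = F i * K i) \<and>
      (2 \<le> i \<longrightarrow>
         v * Kb i * E (i - 1) - E (i - 1) * Kb i = - (Ki i * Eb (i - 1)) \<and>
         v * Kb i * F (i - 1) - F (i - 1) * Kb i = K i * Fb (i - 1) \<and>
         v * Kb i * Eb (i - 1) + Eb (i - 1) * Kb i = Ki i * E (i - 1) \<and>
         v * Kb i * Fb (i - 1) + Fb (i - 1) * Kb i = K i * F (i - 1)) \<and>
      (\<forall>j\<in>{1..n-1}. j \<noteq> i \<and> j + 1 \<noteq> i \<longrightarrow>
         Kb i * E j = E j * Kb i \<and> Kb i * F j = F j * Kb i \<and>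
         Kb i * Eb j = - (Eb j * Kb i) \<and> Kb i * Fb j = - (Fb j * Kb i))) \<and>
   \<comment> \<open>QQ4\<close>
   (\<forall>i\<in>{1..n-1}. \<forall>j\<in>{1..n-1}.
      E i * F j - F j * E i =
        (if i = j then sc (inverse (qv - inverse qv)) * (K i * Ki (i + 1) - Ki i * K (i + 1)) else 0) \<and>
      Eb i * Fb j + Fb j * Eb i =
        (if i = j then sc (inverse (qv - inverse qv)) * (K i * K (i + 1) - Ki i * Ki (i + 1))
                     + sc (qv - inverse qv) * Kb i * Kb (i + 1) else 0) \<and>
      E i * Fb j - Fb j * E i =
        (if i = j then Ki (i + 1) * Kb i - Kb (i + 1) * Ki i else 0) \<and>
      Eb i * F j - F j * Eb i =
        (if i = j then K (i + 1) * Kb i - Kb (i + 1) * K i else 0)) \<and>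
   \<comment> \<open>QQ5\<close>
   (\<forall>i\<in>{1..n-1}.
      Eb i ^ 2 = - (sc ((qv - inverse qv) / (qv + inverse qv)) * E i ^ 2) \<and>
      Fb i ^ 2 = sc ((qv - inverse qv) / (qv + inverse qv)) * F i ^ 2) \<and>
   (\<forall>i\<in>{1..n-1}. \<forall>j\<in>{1..n-1}. i \<noteq> j + 1 \<and> j \<noteq> i + 1 \<longrightarrow>
      E i * Eb j = Eb j * E i \<and> F i * Fb j = Fb j * F i) \<and>
   (\<forall>i\<in>{1..n-1}. \<forall>j\<in>{1..n-1}. j + 1 < i \<or> i + 1 < j \<longrightarrow>
      E i * E j = E j * E i \<and> F i * F j = F j * F i \<and>
      Eb i * Eb j = - (Eb j * Eb i) \<and> Fb i * Fb j = - (Fb j * Fb i)) \<and>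
   (\<forall>i\<in>{1..n-1}. i + 1 \<le> n - 1 \<longrightarrow>
      E i * E (i + 1) - v * E (i + 1) * E i = Eb i * Eb (i + 1) + v * Eb (i + 1) * Eb i \<and>
      E i * Eb (i + 1) - v * Eb (i + 1) * E i = Eb i * E (i + 1) - v * E (i + 1) * Eb i \<and>
      F i * F (i + 1) - v * F (i + 1) * F i = - (Fb i * Fb (i + 1) + v * Fb (i + 1) * Fb i) \<and>
      F i * Fb (i + 1) - v * Fb (i + 1) * F i = Fb i * F (i + 1) - v * F (i + 1) * Fb i) \<and>
   \<comment> \<open>QQ6\<close>
   (\<forall>i\<in>{1..n-1}. \<forall>j\<in>{1..n-1}. i = j + 1 \<or> j = i + 1 \<longrightarrow>
      (\<forall>X\<in>{E j, Eb j}. E i ^ 2 * X - sc (qv + inverse qv) * E i * X * E i + X * E i ^ 2 = 0) \<and>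
      (\<forall>Y\<in>{F j, Fb j}. F i ^ 2 * Y - sc (qv + inverse qv) * F i * Y * F i + Y * F i ^ 2 = 0)))"

text \<open>Quantum root vectors E_{i,j} (i < j): E_{i,i+1} = E_i,
  E_{i,j+1} = - E_{i,j} E_j + v^{-1} E_j E_{i,j}. Parameter w stands for v^{-1}.
  Values for j \<le> i are irrelevant.\<close>
fun Eroot :: "'a::ring_1 \<Rightarrow> (nat \<Rightarrow> 'a) \<Rightarrow> nat \<Rightarrow> nat \<Rightarrow> 'a" where
  "Eroot w E i 0 = 0"
| "Eroot w E i (Suc j) =
     (if j < i then 0 else if j = i then E i
      else - (Eroot w E i j * E j) + w * E j * Eroot w E i j)"

end

theory Submission
  imports Defs
begin

definition qS :: "'a::ring_1 \<Rightarrow> 'a \<Rightarrow> 'a \<Rightarrow> 'a" where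
  "qS t P Q = P * P * Q - t * P * Q * P + Q * P * P"
definition qrt :: "'a::ring_1 \<Rightarrow> 'a \<Rightarrow> 'a \<Rightarrow> 'a" where
  "qrt w P Q = - (P * Q) + w * Q * P"

locale qr =
  fixes v w :: "'a::ring_1"
  assumes vc: "\<And>x. v * x = x * v" and wc: "\<And>x. w * x = x * w" and vw: "v * w = 1"
begin
lemma wv: "w * v = 1" using vw wc by metis
lemma sl: "v * (w * y) = y" "w * (v * y) = y" by (simp_all add: mult.assoc[symmetric] vw wv)
lemma cr: "x * (v * y) = v * (x * y)" "x * (w * y) = w * (x * y)" "x * v = v * x" "x * w = w * x"
  by (metis mult.assoc vc, metis mult.assoc wc, metis vc, metis wc)

abbreviation "S \<equiv> qS (v + w)"
abbreviation "rt \<equiv> qrt w"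

lemma g1_cert:
  shows "S A (rt B C) = - S A B * C + w * (A * C - C * A) * A * B - w * w * (A * C - C * A) * B * A - (A * C - C * A) * B * A + w * A * (A * C - C * A) * B - w * A * B * (A * C - C * A) - v * A * B * (A * C - C * A) + B * (A * C - C * A) * A + B * A * (A * C - C * A) + w * C * S A B"
  unfolding qS_def qrt_def
  by (simp add: algebra_simps sl cr[of A] cr[of B] cr[of C])

lemma g2_cert:
  shows "(v + w) * (S (rt B C) A) = S B A * C * C - S B C * C * A + w * w * w * S C B * A * B + w * S C B * A * B - w * w * S C B * B * A - S C B * B * A - w * w * (A * C - C * A) * B * B * C - (A * C - C * A) * B * B * C + w * w * (A * C - C * A) * C * B * B - A * S B C * C - w * w * A * S C B * B - A * S C B * B + A * C * S B C + w * w * B * (A * C - C * A) * B * C + B * (A * C - C * A) * B * C + B * (A * C - C * A) * B * C + v * v * B * (A * C - C * A) * B * C - w * B * (A * C - C * A) * C * B - v * B * (A * C - C * A) * C * B + w * B * A * S C B + v * B * A * S C B - B * B * (A * C - C * A) * C - B * B * C * (A * C - C * A) + w * w * w * B * C * (A * C - C * A) * B + w * B * C * (A * C - C * A) * B - w * w * C * S B A * C - C * S B A * C + C * S B C * A + w * w * C * (A * C - C * A) * B * B - w * w * w * w * C * B * (A * C - C * A) * B - w * w * C * B * (A * C - C * A) * B - w * w * C * B * (A * C - C * A) * B - C * B * (A * C - C * A) * B + w * w * C * B * B * (A * C - C * A) + C * B * B * (A * C - C * A) + w * w * C * C * S B A"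
  unfolding qS_def qrt_def
  by (simp add: algebra_simps sl cr[of A] cr[of B] cr[of C])

lemma g3_cert:
  shows "(v + w) * (S (rt A B) C) = - S A B * B * C + w * S A B * C * B + v * S A B * C * B + w * w * S B C * A * A - (A * C - C * A) * A * B * B + w * w * (A * C - C * A) * B * B * A + (A * C - C * A) * B * B * A - w * w * A * S B C * A - A * S B C * A - A * (A * C - C * A) * B * B + A * A * S B C + w * w * A * B * (A * C - C * A) * B + A * B * (A * C - C * A) * B + A * B * (A * C - C * A) * B + v * v * A * B * (A * C - C * A) * B - w * w * A * B * B * (A * C - C * A) - A * B * B * (A * C - C * A) - w * w * B * S A B * C + w * w * w * B * (A * C - C * A) * A * B + w * B * (A * C - C * A) * A * B - w * w * w * w * B * (A * C - C * A) * B * A - w * w * B * (A * C - C * A) * B * A - w * w * B * (A * C - C * A) * B * A - B * (A * C - C * A) * B * A - w * B * A * (A * C - C * A) * B - v * B * A * (A * C - C * A) * B + w * w * B * B * (A * C - C * A) * A + w * w * B * B * A * (A * C - C * A) + w * w * w * B * C * S A B + w * B * C * S A B - C * S A B * B - w * w * C * B * S A B"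
  unfolding qS_def qrt_def
  by (simp add: algebra_simps sl cr[of A] cr[of B] cr[of C])

lemma g4_cert:
  shows "S C (rt A B) = w * S C B * A - w * (A * C - C * A) * B * C - v * (A * C - C * A) * B * C + (A * C - C * A) * C * B - A * S C B + w * B * (A * C - C * A) * C + w * B * C * (A * C - C * A) + C * (A * C - C * A) * B - w * w * C * B * (A * C - C * A) - C * B * (A * C - C * A)"
  unfolding qS_def qrt_def
  by (simp add: algebra_simps sl cr[of A] cr[of B] cr[of C])

lemma g5_cert:
  shows "(v + w) * (B * rt (rt A B) C - rt (rt A B) C * B) = - S B A * C - w * w * S B C * A - (A * C - C * A) * B * B + A * S B C + w * w * B * (A * C - C * A) * B + B * (A * C - C * A) * B - w * w * B * B * (A * C - C * A) + w * w * C * S B A"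
  unfolding qS_def qrt_def
  by (simp add: algebra_simps sl cr[of A] cr[of B] cr[of C])

lemma g6_cert:
  shows "(v + w) * (rt A B * rt B C - rt B C * rt A B - (v - w) * rt (rt A B) C * B) = w * S B A * C - w * S B C * A - v * (A * C - C * A) * B * B + v * A * S B C + w * B * (A * C - C * A) * B + v * B * (A * C - C * A) * B - w * B * B * (A * C - C * A) - w * w * w * C * S B A"
  unfolding qS_def qrt_def
  by (simp add: algebra_simps sl cr[of A] cr[of B] cr[of C])
end

lemma qv_nz: "qv \<noteq> 0"
proof
  assume "qv = 0"
  hence "Fract [:0, 1:] 1 = (Fract 0 1 :: qfun)" by (simp add: qv_def Zero_fract_def[symmetric])
  hence "[:0, 1:] * 1 = (0 :: rat poly) * 1" by (subst (asm) eq_fract) auto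
  thus False by simp
qed

lemma qv_t_nz: "qv + inverse qv \<noteq> 0"
proof
  assume "qv + inverse qv = 0"
  hence "Fract ([:0, 1:] * [:0, 1:] + 1 * 1) (1 * [:0, 1:]) = (Fract 0 1 :: qfun)"
    by (simp add: qv_def Zero_fract_def[symmetric])
  hence "([:0, 1:] * [:0, 1:] + 1 * 1) * 1 = (0 :: rat poly) * (1 * [:0, 1:])"
    by (subst (asm) eq_fract) auto
  hence "poly ([:0, 1:] * [:0, 1:] + 1 * 1 :: rat poly) 0 = 0" by simp
  thus False by simp
qed

declare Eroot.simps[simp del]

locale qroot = qr v w for v w :: "'a::ring_1" +
  fixes u :: 'a and E :: "nat \<Rightarrow> 'a" and n :: nat
  assumes u: "u * (v + w) = 1"
  and Ecomm: "\<And>p q. 1 \<le> p \<Longrightarrow> q \<le> n - 1 \<Longrightarrow> p + 1 < q \<Longrightarrow> E p * E q = E q * E p"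
  and Eserre: "\<And>p. 1 \<le> p \<Longrightarrow> p + 1 \<le> n - 1 \<Longrightarrow> S (E p) (E (p+1)) = 0 \<and> S (E (p+1)) (E p) = 0"
begin

abbreviation "R \<equiv> Eroot w E"

lemma R_base: "R i (Suc i) = E i" by (simp add: Eroot.simps)
lemma R_step: "i < j \<Longrightarrow> R i (Suc j) = rt (R i j) (E j)" by (simp add: Eroot.simps qrt_def)

lemma comm_rt:
  assumes a: "X * P = P * X" "X * Q = Q * X"
  shows "X * rt P Q = rt P Q * X"
proof -
  have 1: "X * (P * Q) = P * Q * X" by (metis a mult.assoc)
  have 2: "X * (w * Q * P) = w * Q * P * X" by (metis a mult.assoc wc)
  show ?thesis unfolding qrt_def by (simp add: right_diff_distrib left_diff_distrib 1 2)
qed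

lemma L1: "i < j \<Longrightarrow> (\<And>p. i \<le> p \<Longrightarrow> p < j \<Longrightarrow> X * E p = E p * X) \<Longrightarrow> X * R i j = R i j * X"
proof (induction j)
  case 0 then show ?case by simp
next
  case (Suc j)
  show ?case
  proof (cases "j = i")
    case True then show ?thesis using Suc.prems by (simp add: R_base)
  next
    case False
    hence ij: "i < j" using Suc.prems by simp
    have h1: "X * R i j = R i j * X" using Suc.IH ij Suc.prems(2) by simp
    have h2: "X * E j = E j * X" using Suc.prems(2) ij by simp
    show ?thesis unfolding R_step[OF ij] using h1 h2 by (rule comm_rt)
  qed
qed

lemma RcommE: "1 \<le> i \<Longrightarrow> i < j \<Longrightarrow> j < q \<Longrightarrow> q \<le> n - 1 \<Longrightarrow> E q * R i j = R i j * E q"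
  by (rule L1) (auto intro!: Ecomm[symmetric])

lemma RcommR: "1 \<le> i \<Longrightarrow> i < j \<Longrightarrow> j < k \<Longrightarrow> k < l \<Longrightarrow> l \<le> n \<Longrightarrow> R i j * R k l = R k l * R i j"
  by (rule L1) (auto intro!: RcommE[symmetric])

lemma L2gen:
  assumes h1: "P * Y = Y * P" and h2: "P * Q = w * Q * P - Rr"
  shows "P * rt Q Y = w * rt Q Y * P - rt Rr Y"
proof -
  have r: "Rr = w * Q * P - P * Q" using h2 by (simp add: algebra_simps)
  have c1: "P * (Y * z) = Y * (P * z)" for z by (metis h1 mult.assoc)
  show ?thesis unfolding r qrt_def
    by (simp add: algebra_simps sl cr[of P] cr[of Q] cr[of Y] h1 c1)
qed

lemma L2: "1 \<le> i \<Longrightarrow> i < j \<Longrightarrow> j < l \<Longrightarrow> l \<le> n \<Longrightarrow> R i j * R j l = w * R j l * R i j - R i l"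
proof (induction l)
  case 0 then show ?case by simp
next
  case (Suc l)
  show ?case
  proof (cases "j = l")
    case True
    show ?thesis unfolding True R_base R_step[OF Suc.prems(2)[unfolded True]]
      by (simp add: qrt_def algebra_simps)
  next
    case False
    hence jl: "j < l" using Suc.prems by simp
    have il: "i < l" using jl Suc.prems by simp
    have h2: "R i j * R j l = w * R j l * R i j - R i l" using Suc jl by simp
    have h1: "R i j * E l = E l * R i j" using RcommE[of i j l] Suc.prems jl by simp
    show ?thesis unfolding R_step[OF jl] R_step[OF il] using h1 h2 by (rule L2gen)
  qed
qed

lemma L2': "1 \<le> i \<Longrightarrow> i < j \<Longrightarrow> j < l \<Longrightarrow> l \<le> n \<Longrightarrow> R i l = rt (R i j) (R j l)"
  by (simp add: qrt_def L2)

lemma serre_v: "P * rt P Q - v * rt P Q * P = - S P Q" "rt P Q * Q - v * Q * rt P Q = - S Q P"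
  unfolding qS_def qrt_def
  by (simp_all add: algebra_simps sl cr[of P] cr[of Q])

lemma serre_v': "S P Q = 0 \<Longrightarrow> P * rt P Q = v * rt P Q * P" "S Q P = 0 \<Longrightarrow> rt P Q * Q = v * Q * rt P Q"
  using serre_v[of P Q] by simp_all

lemma ucancel: "(v + w) * X = 0 \<Longrightarrow> X = 0"
proof -
  assume "(v + w) * X = 0"
  hence "u * ((v + w) * X) = 0" by simp
  thus "X = 0" by (simp add: mult.assoc[symmetric] u)
qed

lemma gen3:
  assumes "S A B = 0" "S B A = 0" "S B C = 0" "S C B = 0" "A * C = C * A"
  shows "S A (rt B C) = 0" "S (rt B C) A = 0" "S (rt A B) C = 0" "S C (rt A B) = 0"
    "B * rt (rt A B) C = rt (rt A B) C * B"
    "rt A B * rt B C = rt B C * rt A B + (v - w) * rt (rt A B) C * B"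
proof -
  have ac: "A * C - C * A = 0" using assms by simp
  show "S A (rt B C) = 0" by (simp add: g1_cert assms ac)
  show "S C (rt A B) = 0" by (simp add: g4_cert assms ac)
  show "S (rt B C) A = 0" by (rule ucancel) (simp add: g2_cert assms ac)
  show "S (rt A B) C = 0" by (rule ucancel) (simp add: g3_cert assms ac)
  have "B * rt (rt A B) C - rt (rt A B) C * B = 0" by (rule ucancel) (simp add: g5_cert assms ac)
  thus "B * rt (rt A B) C = rt (rt A B) C * B" by simp
  have "rt A B * rt B C - rt B C * rt A B - (v - w) * rt (rt A B) C * B = 0"
    by (rule ucancel) (simp add: g6_cert assms ac)
  thus "rt A B * rt B C = rt B C * rt A B + (v - w) * rt (rt A B) C * B"
    by (simp add: algebra_simps)
qed

lemma D_aux: "l - i = m \<Longrightarrow> 1 \<le> i \<Longrightarrow> i < j \<Longrightarrow> j < l \<Longrightarrow> l \<le> n \<Longrightarrow>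
  S (R i j) (R j l) = 0 \<and> S (R j l) (R i j) = 0"
proof (induction m arbitrary: i j l rule: less_induct)
  case (less m)
  consider (a) "j + 1 < l" | (b) "j + 1 = l" "i + 1 < j" | (c) "j + 1 = l" "i + 1 = j"
    using less.prems by linarith
  then show ?case
  proof cases
    case a
    have h1: "S (R i j) (R j (l-1)) = 0 \<and> S (R j (l-1)) (R i j) = 0"
      using less.IH[of "l - 1 - i" "l - 1" i j] less.prems a by auto
    have h2: "S (R j (l-1)) (R (l-1) l) = 0 \<and> S (R (l-1) l) (R j (l-1)) = 0"
      using less.IH[of "l - j" l j "l - 1"] less.prems a by auto
    have el: "R (l-1) l = E (l-1)" using R_base[of "l-1"] a by simp
    have cm: "R i j * E (l-1) = E (l-1) * R i j" using RcommE[of i j "l-1"] less.prems a by simp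
    have st: "R j l = rt (R j (l-1)) (E (l-1))" using R_step[of j "l-1"] a by simp
    show ?thesis using gen3(1,2)[of "R i j" "R j (l-1)" "E (l-1)"] h1 h2 cm unfolding el st by simp
  next
    case b
    have h1: "S (R i (i+1)) (R (i+1) j) = 0 \<and> S (R (i+1) j) (R i (i+1)) = 0"
      using less.IH[of "j - i" j i "i+1"] less.prems b by auto
    have h2: "S (R (i+1) j) (R j l) = 0 \<and> S (R j l) (R (i+1) j) = 0"
      using less.IH[of "l - (i+1)" l "i+1" j] less.prems b by auto
    have el: "R j l = E j" using R_base[of j] b by simp
    have ei: "R i (i+1) = E i" using R_base[of i] by simp
    have cm: "E i * E j = E j * E i" using Ecomm[of i j] less.prems b by simp
    have st: "R i j = rt (E i) (R (i+1) j)" using L2'[of i "i+1" j] less.prems b ei by simp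
    show ?thesis using gen3(3,4)[of "E i" "R (i+1) j" "E j"] h1 h2 cm unfolding el ei st by simp
  next
    case c
    have el: "R j l = E (i+1)" using R_base[of j] c by simp
    have ei: "R i j = E i" using R_base[of i] c by simp
    show ?thesis unfolding el ei using Eserre[of i] less.prems c by simp
  qed
qed

lemma D: "1 \<le> i \<Longrightarrow> i < j \<Longrightarrow> j < l \<Longrightarrow> l \<le> n \<Longrightarrow>
  S (R i j) (R j l) = 0 \<and> S (R j l) (R i j) = 0"
  using D_aux by blast

lemma main_cases:
  assumes idx: "1 \<le> i" "i < j" "j \<le> n" "1 \<le> k" "k < l" "l \<le> n" "i \<le> k"
  shows
     "((i < j \<and> j < k \<and> k < l) \<or> (i < k \<and> k < l \<and> l < j) \<longrightarrow>
        R i j * R k l = R k l * R i j) \<and>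
     (i < j \<and> j = k \<and> k < l \<longrightarrow>
        R i j * R k l = w * R k l * R i j - R i l) \<and>
     ((i = k \<and> k < j \<and> j < l) \<or> (i < k \<and> k < j \<and> j = l) \<longrightarrow>
        R i j * R k l = v * R k l * R i j) \<and>
     (i < k \<and> k < j \<and> j < l \<longrightarrow>
        R i j * R k l = R k l * R i j + (v - w) * R i l * R k j)"
proof (intro conjI impI)
  assume "(i < j \<and> j < k \<and> k < l) \<or> (i < k \<and> k < l \<and> l < j)"
  then show "R i j * R k l = R k l * R i j"
  proof
    assume "i < j \<and> j < k \<and> k < l"
    then show ?thesis by (intro RcommR) (use idx in auto)
  next
    assume h: "i < k \<and> k < l \<and> l < j"
    have d1: "S (R i k) (R k l) = 0 \<and> S (R k l) (R i k) = 0" using D idx h by simp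
    have d2: "S (R k l) (R l j) = 0 \<and> S (R l j) (R k l) = 0" using D idx h by simp
    have cm: "R i k * R l j = R l j * R i k" by (intro RcommR) (use idx h in auto)
    have e1: "R i l = rt (R i k) (R k l)" using L2' idx h by simp
    have e2: "R i j = rt (R i l) (R l j)" using L2' idx h by simp
    show ?thesis using gen3(5)[of "R i k" "R k l" "R l j"] d1 d2 cm unfolding e2 e1 by simp
  qed
next
  assume "i < j \<and> j = k \<and> k < l"
  then show "R i j * R k l = w * R k l * R i j - R i l" using L2 idx by simp
next
  assume "(i = k \<and> k < j \<and> j < l) \<or> (i < k \<and> k < j \<and> j = l)"
  then show "R i j * R k l = v * R k l * R i j"
  proof
    assume h: "i = k \<and> k < j \<and> j < l"
    have d: "S (R i j) (R j l) = 0" using D idx h by simp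
    have e: "R k l = rt (R i j) (R j l)" using L2' idx h by simp
    show ?thesis using serre_v'(1)[OF d] unfolding e by simp
  next
    assume h: "i < k \<and> k < j \<and> j = l"
    have d: "S (R k j) (R i k) = 0" using D idx h by simp
    have e: "R i j = rt (R i k) (R k j)" using L2' idx h by simp
    show ?thesis using serre_v'(2)[OF d] h unfolding e by simp
  qed
next
  assume h: "i < k \<and> k < j \<and> j < l"
  have d1: "S (R i k) (R k j) = 0 \<and> S (R k j) (R i k) = 0" using D idx h by simp
  have d2: "S (R k j) (R j l) = 0 \<and> S (R j l) (R k j) = 0" using D idx h by simp
  have cm: "R i k * R j l = R j l * R i k" by (intro RcommR) (use idx h in auto)
  have e1: "R i j = rt (R i k) (R k j)" using L2' idx h by simp
  have e2: "R k l = rt (R k j) (R j l)" using L2' idx h by simp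
  have e3: "R i l = rt (R i j) (R j l)" using L2' idx h by simp
  show "R i j * R k l = R k l * R i j + (v - w) * R i l * R k j"
    using gen3(6)[of "R i k" "R k j" "R j l"] d1 d2 cm unfolding e3 e1 e2 by simp
qed

end


theorem lemma2p8:
  fixes sc :: "qfun \<Rightarrow> 'a::ring_1"
    and K Ki Kb E F Eb Fb :: "nat \<Rightarrow> 'a"
    and n i j k l :: nat
  assumes alg: "qalg sc"
    and rels: "qq_rels n sc K Ki Kb E F Eb Fb"
    and idx: "1 \<le> i" "i < j" "j \<le> n" "1 \<le> k" "k < l" "l \<le> n" "i \<le> k"
  shows "let v = sc qv; vi = sc (inverse qv); R = Eroot vi E in
     ((i < j \<and> j < k \<and> k < l) \<or> (i < k \<and> k < l \<and> l < j) \<longrightarrow>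
        R i j * R k l = R k l * R i j) \<and>
     (i < j \<and> j = k \<and> k < l \<longrightarrow>
        R i j * R k l = vi * R k l * R i j - R i l) \<and>
     ((i = k \<and> k < j \<and> j < l) \<or> (i < k \<and> k < j \<and> j = l) \<longrightarrow>
        R i j * R k l = v * R k l * R i j) \<and>
     (i < k \<and> k < j \<and> j < l \<longrightarrow>
        R i j * R k l = R k l * R i j + sc (qv - inverse qv) * R i l * R k j)"
proof -
  have sc1: "sc 1 = 1" and scadd: "\<And>x y. sc (x + y) = sc x + sc y"
    and scmul: "\<And>x y. sc (x * y) = sc x * sc y" and sccen: "\<And>x y. sc x * y = y * sc x"
    using alg unfolding qalg_def by blast+
  have scdiff: "sc (x - y) = sc x - sc y" for x y
    using scadd[of "x - y" y] by (simp add: eq_diff_eq)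
  define t where "t = qv + inverse qv"
  have t_nz: "t \<noteq> 0" using qv_t_nz t_def by simp
  have sct: "sc t = sc qv + sc (inverse qv)" using scadd t_def by simp
  have QQ5: "\<forall>i\<in>{1..n-1}. \<forall>j\<in>{1..n-1}. j + 1 < i \<or> i + 1 < j \<longrightarrow>
      E i * E j = E j * E i \<and> F i * F j = F j * F i \<and>
      Eb i * Eb j = - (Eb j * Eb i) \<and> Fb i * Fb j = - (Fb j * Fb i)"
    using rels unfolding qq_rels_def Let_def by blast
  have QQ6: "\<forall>i\<in>{1..n-1}. \<forall>j\<in>{1..n-1}. i = j + 1 \<or> j = i + 1 \<longrightarrow>
      (\<forall>X\<in>{E j, Eb j}. E i ^ 2 * X - sc (qv + inverse qv) * E i * X * E i + X * E i ^ 2 = 0) \<and>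
      (\<forall>Y\<in>{F j, Fb j}. F i ^ 2 * Y - sc (qv + inverse qv) * F i * Y * F i + Y * F i ^ 2 = 0)"
    using rels unfolding qq_rels_def Let_def by blast
  interpret q: qroot "sc qv" "sc (inverse qv)" "sc (inverse t)" E n
  proof
    show "sc qv * x = x * sc qv" for x by (rule sccen)
    show "sc (inverse qv) * x = x * sc (inverse qv)" for x by (rule sccen)
    show "sc qv * sc (inverse qv) = 1" using qv_nz scmul[of qv "inverse qv"] sc1 by simp
    show "sc (inverse t) * (sc qv + sc (inverse qv)) = 1"
      using t_nz scmul[of "inverse t" t] sc1 sct by simp
    show "E p * E q = E q * E p" if "1 \<le> p" "q \<le> n - 1" "p + 1 < q" for p q
      using QQ5 that by auto
    show "qS (sc qv + sc (inverse qv)) (E p) (E (p+1)) = 0 \<and> qS (sc qv + sc (inverse qv)) (E (p+1)) (E p) = 0"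
      if "1 \<le> p" "p + 1 \<le> n - 1" for p
    proof -
      have m: "p \<in> {1..n-1}" "p+1 \<in> {1..n-1}" using that by auto
      have a: "E p ^ 2 * E (p+1) - sc (qv + inverse qv) * E p * E (p+1) * E p + E (p+1) * E p ^ 2 = 0"
        using QQ6[rule_format, OF m(1) m(2)] by simp
      have b: "E (p+1) ^ 2 * E p - sc (qv + inverse qv) * E (p+1) * E p * E (p+1) + E p * E (p+1) ^ 2 = 0"
        using QQ6[rule_format, OF m(2) m(1)] by simp
      show ?thesis using a b unfolding qS_def scadd by (simp add: power2_eq_square mult.assoc)
    qed
  qed
  show ?thesis
    using q.main_cases[OF idx] unfolding Let_def scdiff by simp
qed

end
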